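(* Consider the iterates of AS-ALM and fix $k\ge0$ with $\eta_k\in(0,1/\nu)$. Let $\tilde\lambda^k=\lambda^k-\beta(Ax^{k+1}-b)$. Then for all $x\in\mathcal X$, $$f(x)-f(x^{k+1})+\langle x-x^{k+1},-A^\top\tilde\lambda^k\rangle\ge\langle x^{k+1}-x,\mathcal D_k(x^{k+1}-x^k)\rangle+\zeta^k(x).$$
   Context: Setting. $\mathcal X\subset\mathbb R^{n_1}$ is a nonempty closed convex set; $A\in\mathbb R^{n\times n_1}$, $b\in\mathbb R^n$; $f=\frac1N\sum_{j=1}^Nf_j$, each $f_j$ real-valued, convex and continuously differentiable on an open set containing $\mathcal X$. The problem is $\min\{f(x):Ax=b,\ x\in\mathcal X\}$. A fixed symmetric positive definite $H$ and a constant $\nu>0$ satisfy $\|\nabla f_j(x_1)-\nabla f_j(x_2)\|_{H^{-1}}\le\nu\|x_1-x_2\|_H$ for all $x_1,x_2\in\mathcal X$ and all $j$. For symmetric $G$, $\|v\|_G^2:=v^\top Gv$; $G_1\succeq G_2$ means $G_1-G_2$ is positive semidefinite. Subroutine xsub. Inputs: $x^k\in\mathcal X$, $\breve x^k$, $h\in\mathbb R^{n_1}$, an integer $m_k\ge1$, $\eta_k>0$, a symmetric matrix $M_k$. Set $x_1=x^k$, $\breve x_1=\breve x^k$. For $t=1,\dots,m_k$: draw $\xi_t$ uniformly from $\{1,\dots,N\}$, independently of everything generated before; set $\beta_t=2/(t+1)$, $\gamma_t=2/(t\eta_k)$, $\hat x_t=\beta_t\breve x_t+(1-\beta_t)x_t$,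 $d_t=\nabla f_{\xi_t}(\hat x_t)+e_t$ where $e_t$ is a random vector whose conditional expectation given all previously generated random quantities and $\xi_t$ is $0$; $\breve x_{t+1}=\arg\min_{x\in\mathcal X}\{\langle d_t+h,x\rangle+\frac{\gamma_t}2\|x-\breve x_t\|_H^2+\frac12\|x-x^k\|_{M_k}^2\}$; $x_{t+1}=\beta_t\breve x_{t+1}+(1-\beta_t)x_t$. Output $x^{k+1}=x_{m_k+1}$, $\breve x^{k+1}=\breve x_{m_k+1}$. Put $\delta_t=\nabla f(\hat x_t)-d_t$ (inner quantities of outer iteration $k$), and for $x\in\mathcal X$ $$\zeta^k(x)=\frac{2}{m_k(m_k+1)}\Big[\frac1{\eta_k}\big(\|x-\breve x^{k+1}\|_H^2-\|x-\breve x^k\|_H^2\big)-\sum_{t=1}^{m_k}t\langle\delta_t,\breve x_t-x\rangle-\frac{\eta_k}{4(1-\eta_k\nu)}\sum_{t=1}^{m_k}t^2\|\delta_t\|_{H^{-1}}^2\Big].$$ Algorithm AS-ALM. Parameters: $\beta>0$, $s\in(0,2]$, the matrix $H$. Start: $(x^0,\lambda^0)\in\mathcal X\times\mathbb R^n$, $\breve x^0=x^0$. For $k=0,1,\dots$: choose an integer $m_k\ge1$, $\eta_k>0$ and a symmetric $M_k$ with $\mathcal D_k:=M_k-\beta A^\top A\succeq0$; set $h^k=-A^\top[\lambda^k-\beta(Ax^k-b)]$; compute $(x^{k+1},\breve x^{k+1})$ by xsub with inputs $x^k,\breve x^k,h^k,m_k,\eta_k,M_k$; $\lambda^{k+1}=\lambda^k-s\beta(Ax^{k+1}-b)$.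 *)

theory Defs
  imports "HOL-Analysis.Analysis"
begin

definition qf :: "real^'n^'n \<Rightarrow> real^'n \<Rightarrow> real" where
  "qf G v = v \<bullet> (G *v v)"

definition Gnorm :: "real^'n^'n \<Rightarrow> real^'n \<Rightarrow> real" where
  "Gnorm G v = sqrt (qf G v)"

definition psd :: "real^'n^'n \<Rightarrow> bool" where
  "psd G \<longleftrightarrow> (\<forall>v. 0 \<le> qf G v)"

definition pos_def :: "real^'n^'n \<Rightarrow> bool" where
  "pos_def G \<longleftrightarrow> (\<forall>v. v \<noteq> 0 \<longrightarrow> 0 < qf G v)"

end

theory Submission
  imports Defs
begin


lemma bf_sym:
  fixes G :: "real^'n^'n"
  assumes "transpose G = G"
  shows "a \<bullet> (G *v b) = b \<bullet> (G *v a)"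
proof -
  have "a \<bullet> (G *v b) = (a v* G) \<bullet> b" by (simp add: dot_lmul_matrix)
  also have "\<dots> = (transpose G *v a) \<bullet> b" by simp
  also have "\<dots> = b \<bullet> (G *v a)" using assms by (simp add: inner_commute)
  finally show ?thesis .
qed

lemma qf_add:
  fixes G :: "real^'n^'n"
  assumes "transpose G = G"
  shows "qf G (a + b) = qf G a + 2 * (a \<bullet> (G *v b)) + qf G b"
  using bf_sym[OF assms, of b a]
  by (simp add: qf_def matrix_vector_right_distrib inner_add_left inner_add_right)

lemma qf_diff:
  fixes G :: "real^'n^'n"
  assumes "transpose G = G"
  shows "qf G (a - b) = qf G a - 2 * (a \<bullet> (G *v b)) + qf G b"
  using bf_sym[OF assms, of b a]
  by (simp add: qf_def matrix_vector_mult_diff_distrib inner_diff_left inner_diff_right)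

lemma qf_scale:
  fixes G :: "real^'n^'n"
  shows "qf G (c *\<^sub>R a) = c^2 * qf G a"
  by (simp add: qf_def matrix_vector_mult_scaleR power2_eq_square)

lemma qf_comb:
  fixes G :: "real^'n^'n"
  assumes "transpose G = G"
  shows "qf G (t *\<^sub>R a + (1 - t) *\<^sub>R b) = t * qf G a + (1 - t) * qf G b - t * (1 - t) * qf G (a - b)"
proof -
  have eq1: "qf G (t *\<^sub>R a + (1 - t) *\<^sub>R b) = qf G (t *\<^sub>R a) + 2 * ((t *\<^sub>R a) \<bullet> (G *v ((1 - t) *\<^sub>R b))) + qf G ((1 - t) *\<^sub>R b)"
    by (rule qf_add[OF assms])
  have eq2: "qf G (a - b) = qf G a - 2 * (a \<bullet> (G *v b)) + qf G b" by (rule qf_diff[OF assms])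
  show ?thesis unfolding eq1 eq2 qf_scale by (simp add: matrix_vector_mult_scaleR power2_eq_square algebra_simps)
qed

lemma qf_comb_le:
  fixes G :: "real^'n^'n"
  assumes "transpose G = G" "psd G" "0 \<le> t" "t \<le> 1"
  shows "qf G (t *\<^sub>R a + (1 - t) *\<^sub>R b) \<le> t * qf G a + (1 - t) * qf G b"
proof -
  have "0 \<le> t * (1 - t) * qf G (a - b)" by (intro mult_nonneg_nonneg) (use assms in \<open>auto simp: psd_def\<close>)
  thus ?thesis using qf_comb[OF assms(1)] by simp
qed

lemma pd_psd: "pos_def G \<Longrightarrow> psd G"
  unfolding pos_def_def psd_def qf_def by (metis inner_zero_left matrix_vector_mult_0_right order.refl less_imp_le)

lemma pd_inv:
  fixes H :: "real^'n^'n"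
  assumes "pos_def H"
  shows "H ** matrix_inv H = mat 1 \<and> matrix_inv H ** H = mat 1"
proof -
  have "\<forall>x. H *v x = 0 \<longrightarrow> x = 0"
    using assms unfolding pos_def_def qf_def by force
  hence "\<exists>B. B ** H = mat 1" using matrix_left_invertible_ker by blast
  hence "invertible H" using invertible_left_inverse by blast
  then show ?thesis unfolding invertible_def matrix_inv_def by (rule someI_ex)
qed

lemma H_Hinv:
  fixes H :: "real^'n^'n"
  assumes "pos_def H"
  shows "H *v (matrix_inv H *v a) = a"
  using pd_inv[OF assms] by (simp add: matrix_vector_mul_assoc)

lemma qfinv_eq:
  fixes H :: "real^'n^'n"
  assumes "pos_def H"
  shows "qf (matrix_inv H) a = qf H (matrix_inv H *v a)"
  using H_Hinv[OF assms] by (simp add: qf_def inner_commute)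

lemma qfinv_nonneg:
  fixes H :: "real^'n^'n"
  assumes "pos_def H"
  shows "0 \<le> qf (matrix_inv H) a"
  using qfinv_eq[OF assms] pd_psd[OF assms] psd_def by metis

lemma quad_key:
  fixes H :: "real^'n^'n"
  assumes "transpose H = H" "pos_def H"
  shows "2 * l * (a \<bullet> w) \<le> qf H w + l^2 * qf (matrix_inv H) a"
proof -
  define p where "p = matrix_inv H *v a"
  have Hp: "H *v p = a" using H_Hinv[OF assms(2)] p_def by simp
  have "0 \<le> qf H (w - l *\<^sub>R p)" using pd_psd[OF assms(2)] psd_def by blast
  also have "\<dots> = qf H w - 2 * (w \<bullet> (H *v (l *\<^sub>R p))) + l^2 * qf H p"
    by (simp add: qf_diff[OF assms(1)] qf_scale)
  also have "\<dots> = qf H w - 2 * l * (a \<bullet> w) + l^2 * qf (matrix_inv H) a"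
    using qfinv_eq[OF assms(2), of a] Hp p_def
    by (simp add: matrix_vector_mult_scaleR inner_commute)
  finally show ?thesis by simp
qed

lemma CS_H:
  fixes H :: "real^'n^'n"
  assumes "transpose H = H" "pos_def H"
  shows "a \<bullet> w \<le> sqrt (qf (matrix_inv H) a) * sqrt (qf H w)"
proof -
  define P where "P = qf (matrix_inv H) a"
  define Q where "Q = qf H w"
  have P0: "0 \<le> P" using qfinv_nonneg[OF assms(2)] P_def by simp
  have Q0: "0 \<le> Q" using pd_psd[OF assms(2)] unfolding psd_def Q_def by blast
  have key: "\<And>l. 2 * l * (a \<bullet> w) \<le> Q + l^2 * P" using quad_key[OF assms] P_def Q_def by simp
  show ?thesis
  proof (cases "P = 0")
    case True
    have "a \<bullet> w \<le> 0"
    proof (rule ccontr)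
      assume "\<not> a \<bullet> w \<le> 0"
      hence pos: "a \<bullet> w > 0" by simp
      have "2 * ((Q + 1) / (2 * (a \<bullet> w))) * (a \<bullet> w) \<le> Q" using key[of "(Q + 1) / (2 * (a \<bullet> w))"] True by simp
      moreover have "2 * ((Q + 1) / (2 * (a \<bullet> w))) * (a \<bullet> w) = Q + 1" using pos by (simp add: field_simps)
      ultimately show False by simp
    qed
    thus ?thesis using P_def Q_def P0 Q0 by (simp add: True[unfolded P_def])
  next
    case False
    hence Pp: "P > 0" using P0 by simp
    have "2 * ((a \<bullet> w) / P) * (a \<bullet> w) \<le> Q + ((a \<bullet> w) / P)^2 * P" by (rule key)
    hence "2 * (a \<bullet> w)^2 / P \<le> Q + (a \<bullet> w)^2 / P" using Pp by (simp add: power2_eq_square field_simps)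
    hence "(a \<bullet> w)^2 / P \<le> Q" by simp
    hence "(a \<bullet> w)^2 \<le> P * Q" using Pp by (simp add: field_simps)
    hence "sqrt ((a \<bullet> w)^2) \<le> sqrt (P * Q)" using real_sqrt_le_mono by blast
    hence "\<bar>a \<bullet> w\<bar> \<le> sqrt P * sqrt Q" by (simp add: real_sqrt_mult)
    thus ?thesis using P_def Q_def by simp
  qed
qed



lemma chain_deriv:
  fixes phi :: "real^'n \<Rightarrow> real"
  assumes "(phi has_derivative (\<lambda>h. g \<bullet> h)) (at (u + t *\<^sub>R w))"
  shows "((\<lambda>s. phi (u + s *\<^sub>R w)) has_real_derivative (g \<bullet> w)) (at t)"
proof -
  have l: "((\<lambda>s. u + s *\<^sub>R w) has_derivative (\<lambda>s. s *\<^sub>R w)) (at t)"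
    by (auto intro!: derivative_eq_intros)
  have "((phi \<circ> (\<lambda>s. u + s *\<^sub>R w)) has_derivative ((\<lambda>h. g \<bullet> h) \<circ> (\<lambda>s. s *\<^sub>R w))) (at t)"
    using diff_chain_at[OF l assms] by simp
  moreover have "((\<lambda>h. g \<bullet> h) \<circ> (\<lambda>s. s *\<^sub>R w)) = (*) (g \<bullet> w)"
    by (auto simp: fun_eq_iff)
  ultimately show ?thesis unfolding has_field_derivative_def by (simp add: o_def)
qed

lemma grad_ineq:
  fixes phi :: "real^'n \<Rightarrow> real"
  assumes cv: "convex_on U phi" and dU: "\<forall>y\<in>U. (phi has_derivative (\<lambda>h. g y \<bullet> h)) (at y)"
    and u: "u \<in> U" and v: "v \<in> U"
  shows "phi v \<ge> phi u + g u \<bullet> (v - u)"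
proof (rule ccontr)
  assume "\<not> ?thesis"
  hence pos: "0 < g u \<bullet> (v - u) - (phi v - phi u)" by simp
  define psi where "psi = (\<lambda>s. phi (u + s *\<^sub>R (v - u)) - s * (phi v - phi u))"
  have "((\<lambda>s. phi (u + s *\<^sub>R (v - u))) has_real_derivative (g u \<bullet> (v - u))) (at 0)"
    using chain_deriv[of phi "g u" u 0 "v - u"] dU u by simp
  hence "(psi has_real_derivative (g u \<bullet> (v - u) - (phi v - phi u))) (at 0)"
    unfolding psi_def by (auto intro!: derivative_eq_intros)
  from DERIV_pos_inc_right[OF this pos] obtain d where d: "d > 0" "\<forall>h>0. h < d \<longrightarrow> psi 0 < psi (0 + h)" by blast
  define h where "h = min (d/2) 1"
  have h: "0 < h" "h < d" "h \<le> 1" using d by (auto simp: h_def)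
  hence "psi 0 < psi h" using d by auto
  moreover have "u + h *\<^sub>R (v - u) = (1 - h) *\<^sub>R u + h *\<^sub>R v" by (simp add: algebra_simps)
  hence "phi (u + h *\<^sub>R (v - u)) \<le> (1 - h) * phi u + h * phi v"
    using convex_onD[OF cv, of h u v] h u v by simp
  hence "psi h \<le> psi 0" unfolding psi_def by (simp add: algebra_simps)
  ultimately show False by simp
qed

lemma descent:
  fixes phi :: "real^'n \<Rightarrow> real" and H :: "real^'n^'n"
  assumes Hs: "transpose H = H" and Hp: "pos_def H" and nu: "nu > 0"
    and XU: "X \<subseteq> U" and cX: "convex X"
    and dU: "\<forall>y\<in>U. (phi has_derivative (\<lambda>h. g y \<bullet> h)) (at y)"
    and Lip: "\<forall>y1\<in>X. \<forall>y2\<in>X. Gnorm (matrix_inv H) (g y1 - g y2) \<le> nu * Gnorm H (y1 - y2)"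
    and u: "u \<in> X" and v: "v \<in> X"
  shows "phi v \<le> phi u + g u \<bullet> (v - u) + nu / 2 * qf H (v - u)"
proof -
  define w where "w = v - u"
  define Q where "Q = qf H w"
  have Q0: "0 \<le> Q" using pd_psd[OF Hp] unfolding psd_def Q_def by blast
  define psi where "psi = (\<lambda>s. phi (u + s *\<^sub>R w) - s * (g u \<bullet> w) - nu * s^2 / 2 * Q)"
  have "psi 1 \<le> psi 0"
  proof (rule DERIV_nonpos_imp_nonincreasing[of 0 1 psi])
    fix t :: real assume t: "0 \<le> t" "t \<le> 1"
    have pt: "u + t *\<^sub>R w = (1 - t) *\<^sub>R u + t *\<^sub>R v" by (simp add: w_def algebra_simps)
    hence ptX: "u + t *\<^sub>R w \<in> X" using convexD[OF cX u v, of "1 - t" t] t by simp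
    have "((\<lambda>s. phi (u + s *\<^sub>R w)) has_real_derivative (g (u + t *\<^sub>R w) \<bullet> w)) (at t)"
      using chain_deriv dU ptX XU by blast
    hence D: "(psi has_real_derivative (g (u + t *\<^sub>R w) \<bullet> w - g u \<bullet> w - nu * t * Q)) (at t)"
      unfolding psi_def by (auto intro!: derivative_eq_intros simp: power2_eq_square algebra_simps)
    have "g (u + t *\<^sub>R w) \<bullet> w - g u \<bullet> w = (g (u + t *\<^sub>R w) - g u) \<bullet> w" by (simp add: inner_diff_left)
    also have "\<dots> \<le> Gnorm (matrix_inv H) (g (u + t *\<^sub>R w) - g u) * sqrt Q"
      using CS_H[OF Hs Hp] unfolding Gnorm_def Q_def by blast
    also have "\<dots> \<le> (nu * Gnorm H (t *\<^sub>R w)) * sqrt Q"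
    proof (rule mult_right_mono)
      have "Gnorm (matrix_inv H) (g (u + t *\<^sub>R w) - g u) \<le> nu * Gnorm H ((u + t *\<^sub>R w) - u)"
        using Lip ptX u by blast
      thus "Gnorm (matrix_inv H) (g (u + t *\<^sub>R w) - g u) \<le> nu * Gnorm H (t *\<^sub>R w)" by simp
    qed (use Q0 in simp)
    also have "Gnorm H (t *\<^sub>R w) = t * sqrt Q"
      unfolding Gnorm_def qf_scale Q_def using t by (simp add: real_sqrt_mult)
    also have "nu * (t * sqrt Q) * sqrt Q = nu * t * Q" using Q0 by (simp add: algebra_simps)
    finally have "g (u + t *\<^sub>R w) \<bullet> w - g u \<bullet> w - nu * t * Q \<le> 0" by simp
    thus "\<exists>y. (psi has_real_derivative y) (at t) \<and> y \<le> 0" using D by blast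
  qed simp
  thus ?thesis unfolding psi_def w_def Q_def by simp
qed



lemma three_point:
  fixes H M :: "real^'n^'n"
  assumes Hs: "transpose H = H" and Ms: "transpose M = M" and Hp: "psd H" and Mp: "psd M"
    and gm: "0 \<le> gm" and cX: "convex X" and u'X: "u' \<in> X" and yX: "y \<in> X"
    and Phi_def: "Phi = (\<lambda>z. L \<bullet> z + gm / 2 * qf H (z - c1) + 1 / 2 * qf M (z - c2))"
    and min: "\<forall>z\<in>X. Phi u' \<le> Phi z"
  shows "Phi u' + gm / 2 * qf H (y - u') + 1 / 2 * qf M (y - u') \<le> Phi y"
proof -
  define w where "w = y - u'"
  define G0 where "G0 = L \<bullet> w + gm * ((u' - c1) \<bullet> (H *v w)) + (u' - c2) \<bullet> (M *v w)"
  define K where "K = gm / 2 * qf H w + 1 / 2 * qf M w"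
  have K0: "0 \<le> K" using Hp Mp gm unfolding K_def psd_def by simp
  have exp: "Phi (u' + s *\<^sub>R w) = Phi u' + s * G0 + s^2 * K" for s
  proof -
    have e1: "qf H (u' + s *\<^sub>R w - c1) = qf H (u' - c1) + 2 * s * ((u' - c1) \<bullet> (H *v w)) + s^2 * qf H w"
      using qf_add[OF Hs, of "u' - c1" "s *\<^sub>R w"] by (simp add: qf_scale matrix_vector_mult_scaleR algebra_simps)
    have e2: "qf M (u' + s *\<^sub>R w - c2) = qf M (u' - c2) + 2 * s * ((u' - c2) \<bullet> (M *v w)) + s^2 * qf M w"
      using qf_add[OF Ms, of "u' - c2" "s *\<^sub>R w"] by (simp add: qf_scale matrix_vector_mult_scaleR algebra_simps)
    show ?thesis unfolding Phi_def e1 e2 G0_def K_def by (simp add: inner_add_right algebra_simps)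
  qed
  have G0: "0 \<le> G0"
  proof (rule ccontr)
    assume "\<not> 0 \<le> G0"
    hence neg: "G0 < 0" by simp
    define s where "s = (if K = 0 then 1 else min 1 (- G0 / (2 * K)))"
    have s: "0 < s" "s \<le> 1"
    proof -
      have "K \<noteq> 0 \<Longrightarrow> G0 / (2 * K) < 0" using neg K0 by (intro divide_neg_pos) auto
      thus "0 < s" "s \<le> 1" by (auto simp: s_def)
    qed
    have "s * K \<le> - G0 / 2"
    proof (cases "K = 0")
      case True thus ?thesis using neg by (simp add: s_def)
    next
      case False
      hence Kp: "K > 0" using K0 by simp
      have "s \<le> - G0 / (2 * K)" using False by (simp add: s_def)
      hence "s * K \<le> (- G0 / (2 * K)) * K" using Kp by (intro mult_right_mono) auto
      moreover have "(- G0 / (2 * K)) * K = - G0 / 2" using Kp by (simp add: field_simps)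
      ultimately show ?thesis by simp
    qed
    hence "G0 + s * K < 0" using neg by linarith
    hence "s * (G0 + s * K) < 0" using s by (intro mult_pos_neg) auto
    moreover have "s * G0 + s^2 * K = s * (G0 + s * K)" by (simp add: power2_eq_square algebra_simps)
    ultimately have "s * G0 + s^2 * K < 0" by simp
    moreover have "u' + s *\<^sub>R w \<in> X"
    proof -
      have "u' + s *\<^sub>R w = (1 - s) *\<^sub>R u' + s *\<^sub>R y" by (simp add: w_def algebra_simps)
      thus ?thesis using convexD[OF cX u'X yX, of "1 - s" s] s by simp
    qed
    hence "Phi u' \<le> Phi (u' + s *\<^sub>R w)" using min by blast
    ultimately show False using exp[of s] by simp
  qed
  have "Phi y = Phi u' + G0 + K" using exp[of 1] by (simp add: w_def)
  thus ?thesis using G0 unfolding K_def w_def by simp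
qed

lemma avg_conv:
  fixes fs :: "nat \<Rightarrow> real^'n \<Rightarrow> real" and gs :: "nat \<Rightarrow> real^'n \<Rightarrow> real^'n"
  assumes N: "N \<ge> 1"
    and fconv: "\<forall>j\<in>{1..N}. convex_on U (fs j)"
    and fdiff: "\<forall>j\<in>{1..N}. \<forall>y\<in>U. (fs j has_derivative (\<lambda>h. gs j y \<bullet> h)) (at y)"
    and u: "u \<in> U" and v: "v \<in> U"
  shows "(1 / real N) * (\<Sum>j=1..N. fs j v) \<ge> (1 / real N) * (\<Sum>j=1..N. fs j u) + ((1 / real N) *\<^sub>R (\<Sum>j=1..N. gs j u)) \<bullet> (v - u)"
proof -
  have "(\<Sum>j=1..N. fs j u + gs j u \<bullet> (v - u)) \<le> (\<Sum>j=1..N. fs j v)"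
    using grad_ineq fconv fdiff u v by (intro sum_mono) blast
  hence "(\<Sum>j=1..N. fs j u) + (\<Sum>j=1..N. gs j u) \<bullet> (v - u) \<le> (\<Sum>j=1..N. fs j v)"
    by (simp add: sum.distrib inner_sum_left)
  hence "(1 / real N) * ((\<Sum>j=1..N. fs j u) + (\<Sum>j=1..N. gs j u) \<bullet> (v - u)) \<le> (1 / real N) * (\<Sum>j=1..N. fs j v)"
    by (rule mult_left_mono) simp
  thus ?thesis by (simp add: algebra_simps)
qed

lemma avg_desc:
  fixes fs :: "nat \<Rightarrow> real^'n \<Rightarrow> real" and gs :: "nat \<Rightarrow> real^'n \<Rightarrow> real^'n" and H :: "real^'n^'n"
  assumes N: "N \<ge> 1" and Hs: "transpose H = H" and Hp: "pos_def H" and nu: "nu > 0"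
    and XU: "X \<subseteq> U" and cX: "convex X"
    and fdiff: "\<forall>j\<in>{1..N}. \<forall>y\<in>U. (fs j has_derivative (\<lambda>h. gs j y \<bullet> h)) (at y)"
    and Lip: "\<forall>j\<in>{1..N}. \<forall>y1\<in>X. \<forall>y2\<in>X.
                Gnorm (matrix_inv H) (gs j y1 - gs j y2) \<le> nu * Gnorm H (y1 - y2)"
    and u: "u \<in> X" and v: "v \<in> X"
  shows "(1 / real N) * (\<Sum>j=1..N. fs j v) \<le> (1 / real N) * (\<Sum>j=1..N. fs j u) + ((1 / real N) *\<^sub>R (\<Sum>j=1..N. gs j u)) \<bullet> (v - u) + nu / 2 * qf H (v - u)"
proof -
  have "(\<Sum>j=1..N. fs j v) \<le> (\<Sum>j=1..N. fs j u + gs j u \<bullet> (v - u) + nu / 2 * qf H (v - u))"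
  proof (intro sum_mono)
    fix j assume j: "j \<in> {1..N}"
    show "fs j v \<le> fs j u + gs j u \<bullet> (v - u) + nu / 2 * qf H (v - u)"
      using descent[OF Hs Hp nu XU cX, of "fs j" "gs j" u v] fdiff Lip j u v by blast
  qed
  hence "(\<Sum>j=1..N. fs j v) \<le> (\<Sum>j=1..N. fs j u) + (\<Sum>j=1..N. gs j u) \<bullet> (v - u) + real N * (nu / 2 * qf H (v - u))"
    by (simp add: sum.distrib inner_sum_left)
  hence "(1 / real N) * (\<Sum>j=1..N. fs j v) \<le> (1 / real N) * ((\<Sum>j=1..N. fs j u) + (\<Sum>j=1..N. gs j u) \<bullet> (v - u) + real N * (nu / 2 * qf H (v - u)))"
    by (rule mult_left_mono) simp
  thus ?thesis using N by (simp add: algebra_simps)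
qed


lemma comb_arith:
  fixes b gm nu fp fp' fq fy Gu Gu' Gp Gy Du Du' Dy hp hp' hu' hy Mp Mp' Mu' My Np Np' Nu' Hu Hu' Qd R :: real
  assumes b: "0 \<le> b" "b \<le> 1"
    and A: "2 * fp' \<le> 2 * fq + 2 * b * (Gu' - Gu) + nu * b^2 * Qd"
    and B: "fp \<ge> fq + b * (Gp - Gu)"
    and C: "fy \<ge> fq + Gy - b * Gu - (1 - b) * Gp"
    and Dh: "hp' = b * hu' + (1 - b) * hp"
    and DM: "Mp' \<le> b * Mu' + (1 - b) * Mp"
    and E: "Np' \<le> b * Nu' + (1 - b) * Np"
    and F: "2 * Du' + 2 * hu' + Mu' + gm * Qd + gm * Hu' + Nu' \<le> 2 * Dy + 2 * hy + My + gm * Hu"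
    and G: "2 * b * ((Gu' - Du') - (Gu - Du)) - (b * gm - nu * b^2) * Qd \<le> 2 * R"
  shows "2 * fp' + 2 * hp' + Mp' - 2 * fy - 2 * hy - My + Np'
     \<le> (1 - b) * (2 * fp + 2 * hp + Mp - 2 * fy - 2 * hy - My + Np)
        + 2 * b * ((Gu - Du) - (Gy - Dy)) + b * gm * (Hu - Hu') + 2 * R"
proof -
  have gB: "0 \<le> (1 - b) * (fp - (fq + b * (Gp - Gu)))" using B b by simp
  have gC: "0 \<le> b * (fy - (fq + Gy - b * Gu - (1 - b) * Gp))" using C b by simp
  have gF: "0 \<le> b * (2 * Dy + 2 * hy + My + gm * Hu - (2 * Du' + 2 * hu' + Mu' + gm * Qd + gm * Hu' + Nu'))"
    using F b by simp
  have eq: "((1 - b) * (2 * fp + 2 * hp + Mp - 2 * fy - 2 * hy - My + Np)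
        + 2 * b * ((Gu - Du) - (Gy - Dy)) + b * gm * (Hu - Hu') + 2 * R)
      - (2 * fp' + 2 * hp' + Mp' - 2 * fy - 2 * hy - My + Np')
     = (2 * fq + 2 * b * (Gu' - Gu) + nu * b^2 * Qd - 2 * fp')
       + 2 * ((1 - b) * (fp - (fq + b * (Gp - Gu))))
       + 2 * (b * (fy - (fq + Gy - b * Gu - (1 - b) * Gp)))
       + (b * Mu' + (1 - b) * Mp - Mp') + (b * Nu' + (1 - b) * Np - Np')
       + b * (2 * Dy + 2 * hy + My + gm * Hu - (2 * Du' + 2 * hu' + Mu' + gm * Qd + gm * Hu' + Nu'))
       + (2 * R - (2 * b * ((Gu' - Du') - (Gu - Du)) - (b * gm - nu * b^2) * Qd))"
    unfolding Dh by (simp add: algebra_simps power2_eq_square)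
  have "0 \<le> (2 * fq + 2 * b * (Gu' - Gu) + nu * b^2 * Qd - 2 * fp')
       + 2 * ((1 - b) * (fp - (fq + b * (Gp - Gu))))
       + 2 * (b * (fy - (fq + Gy - b * Gu - (1 - b) * Gp)))
       + (b * Mu' + (1 - b) * Mp - Mp') + (b * Nu' + (1 - b) * Np - Np')
       + b * (2 * Dy + 2 * hy + My + gm * Hu - (2 * Du' + 2 * hu' + Mu' + gm * Qd + gm * Hu' + Nu'))
       + (2 * R - (2 * b * ((Gu' - Du') - (Gu - Du)) - (b * gm - nu * b^2) * Qd))"
    using A gB gC gF DM E G by linarith
  thus ?thesis using eq by linarith
qed

lemma scale_step:
  fixes t eta nu E E' X Y P R :: real
  assumes t: "t \<ge> 1" and eta: "eta > 0" and nu: "nu > 0" and en: "eta * nu < 1" and P: "P \<ge> 0"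
    and R: "R = (2/(t+1))^2 / (2 * ((2/(t+1)) * (2/(t*eta)) - nu * (2/(t+1))^2)) * P"
    and ineq: "2 * E' \<le> (1 - 2/(t+1)) * (2 * E) + 2 * (2/(t+1)) * X + (2/(t+1)) * (2/(t*eta)) * Y + 2 * R"
  shows "t * (t+1) * E' \<le> t * (t - 1) * E + 2 * t * X + (2 / eta) * Y + eta * t^2 / (2 * (1 - eta * nu)) * P"
proof -
  have tp: "t > 0" "t + 1 > 0" using t by auto
  have pos1: "(t + 1) - nu * t * eta > 0"
  proof -
    have "nu * t * eta = (eta * nu) * t" by simp
    also have "\<dots> < 1 * t" using en tp by (intro mult_strict_right_mono) auto
    finally show ?thesis by simp
  qed
  have ceq: "(2/(t+1)) * (2/(t*eta)) - nu * (2/(t+1))^2 = 4 * ((t + 1) - nu * t * eta) / (t * eta * (t+1)^2)"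
  proof -
    have a: "t + 1 \<noteq> 0" "t \<noteq> 0" "eta \<noteq> 0" using tp eta by auto
    show ?thesis using a by (simp add: divide_simps) (simp add: algebra_simps power2_eq_square)
  qed
  have Req: "R = t * eta * P / (2 * ((t + 1) - nu * t * eta))"
  proof -
    have a: "t + 1 \<noteq> 0" "t \<noteq> 0" "eta \<noteq> 0" "(t + 1) - nu * t * eta \<noteq> 0" using tp eta pos1 by auto
    show ?thesis unfolding R ceq using a by (simp add: divide_simps)
  qed
  have Rb: "t * (t + 1) * R \<le> eta * t^2 / (2 * (1 - eta * nu)) * P"
  proof -
    have "t * (t + 1) * R = (eta * t^2 * P) * ((t + 1) / (2 * ((t + 1) - nu * t * eta)))"
      unfolding Req using pos1 by (simp add: field_simps power2_eq_square)
    also have "\<dots> \<le> (eta * t^2 * P) * (1 / (2 * (1 - eta * nu)))"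
    proof (rule mult_left_mono)
      have "(t + 1) * (2 * (1 - eta * nu)) \<le> 1 * (2 * ((t + 1) - nu * t * eta))"
        using eta nu by (simp add: algebra_simps)
      thus "(t + 1) / (2 * ((t + 1) - nu * t * eta)) \<le> 1 / (2 * (1 - eta * nu))"
        using pos1 en by (simp add: divide_simps)
      show "0 \<le> eta * t^2 * P" using eta P by simp
    qed
    finally show ?thesis by simp
  qed
  have "t * (t+1) / 2 * (2 * E') \<le> t * (t+1) / 2 * ((1 - 2/(t+1)) * (2 * E) + 2 * (2/(t+1)) * X + (2/(t+1)) * (2/(t*eta)) * Y + 2 * R)"
    using ineq tp by (intro mult_left_mono) auto
  also have "\<dots> = (t * (t+1) / 2 * (1 - 2/(t+1))) * (2 * E) + (t * (t+1) / 2 * (2/(t+1))) * (2 * X)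
       + (t * (t+1) / 2 * ((2/(t+1)) * (2/(t*eta)))) * Y + 2 * (t * (t + 1) / 2) * R"
  proof -
    have gen: "\<And>k a b c A B C R. (k::real) * (a * A + 2 * b * B + c * C + 2 * R) = (k * a) * A + (k * b) * (2 * B) + (k * c) * C + 2 * k * R"
      by (simp add: algebra_simps)
    show ?thesis by (rule gen)
  qed
  also have "\<dots> = t * (t - 1) * E + 2 * t * X + (2 / eta) * Y + t * (t + 1) * R"
  proof -
    have a: "t + 1 \<noteq> 0" "t \<noteq> 0" "eta \<noteq> 0" using tp eta by auto
    have c1: "t * (t+1) / 2 * (1 - 2/(t+1)) = t * (t - 1) / 2" using a by (simp add: divide_simps) (simp add: algebra_simps)
    have c2: "t * (t+1) / 2 * (2/(t+1)) = t" using a by (simp add: divide_simps)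
    have c3: "t * (t+1) / 2 * ((2/(t+1)) * (2/(t*eta))) = 2 / eta" using a by (simp add: divide_simps)
    have c4: "2 * (t * (t + 1) / 2) = t * (t + 1)" by simp
    show ?thesis unfolding c1 c2 c3 c4 by simp
  qed
  finally show ?thesis using Rb by simp
qed


lemma step_arith:
  fixes t eta nu b gm l P fp fp' fq fy Gu Gu' Gp Gy Du Du' Dy hp hp' hu' hy Mp Mp' Mu' My Np Np' Nu' Hu Hu' Qd
    Gpq' Qpq' Gpq Gyq Dl :: real
  assumes t: "t \<ge> 1" and eta: "eta > 0" and nu: "nu > 0" and en: "eta * nu < 1" and P: "P \<ge> 0"
    and b: "b = 2 / (t + 1)" and gm: "gm = 2 / (t * eta)" and l: "l = b / (b * gm - nu * b^2)"
    and A: "fp' \<le> fq + Gpq' + nu / 2 * Qpq'" and eA1: "Gpq' = b * (Gu' - Gu)" and eA2: "Qpq' = b^2 * Qd"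
    and B: "fq + Gpq \<le> fp" and eB: "Gpq = b * (Gp - Gu)"
    and C: "fq + Gyq \<le> fy" and eC: "Gyq = Gy - b * Gu - (1 - b) * Gp"
    and Dh: "hp' = b * hu' + (1 - b) * hp"
    and DM: "Mp' \<le> b * Mu' + (1 - b) * Mp"
    and E: "Np' \<le> b * Nu' + (1 - b) * Np"
    and F: "(Du' + hu') + gm / 2 * Qd + 1 / 2 * Mu' + gm / 2 * Hu' + 1 / 2 * Nu' \<le> (Dy + hy) + gm / 2 * Hu + 1 / 2 * My"
    and G: "2 * l * Dl \<le> Qd + l^2 * P" and eG: "Dl = (Gu' - Du') - (Gu - Du)"
  shows "t * (t + 1) * (fp' + (hp' + 1 / 2 * Mp') - fy - (hy + 1 / 2 * My) + 1 / 2 * Np')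
     \<le> t * (t - 1) * (fp + (hp + 1 / 2 * Mp) - fy - (hy + 1 / 2 * My) + 1 / 2 * Np)
        + 2 * t * ((Gu - Du) - (Gy - Dy)) + (2 / eta) * (Hu - Hu') + eta * t^2 / (2 * (1 - eta * nu)) * P"
proof -
  define c where "c = b * gm - nu * b^2"
  define R where "R = b^2 / (2 * c) * P"
  have R_eq: "R = (2/(t+1))^2 / (2 * ((2/(t+1)) * (2/(t*eta)) - nu * (2/(t+1))^2)) * P"
    unfolding R_def c_def b gm by simp
  have tp: "t > 0" "t + 1 > 0" using t by auto
  have pos1: "(t + 1) - nu * t * eta > 0"
  proof -
    have "nu * t * eta = (eta * nu) * t" by simp
    also have "\<dots> < 1 * t" using en tp by (intro mult_strict_right_mono) auto
    finally show ?thesis by simp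
  qed
  have ceq: "c = 4 * ((t + 1) - nu * t * eta) / (t * eta * (t+1)^2)"
  proof -
    have a: "t + 1 \<noteq> 0" "t \<noteq> 0" "eta \<noteq> 0" using tp eta by auto
    show ?thesis unfolding c_def b gm using a by (simp add: divide_simps) (simp add: algebra_simps power2_eq_square)
  qed
  have cp: "c > 0" unfolding ceq using pos1 tp eta by (intro divide_pos_pos) auto
  have b01: "0 \<le> b" "b \<le> 1" using t by (auto simp: b)
  have A2: "2 * fp' \<le> 2 * fq + 2 * b * (Gu' - Gu) + nu * b^2 * Qd"
    using A unfolding eA1 eA2 by simp
  have B2: "fp \<ge> fq + b * (Gp - Gu)" using B eB by simp
  have C2: "fy \<ge> fq + Gy - b * Gu - (1 - b) * Gp" using C eC by simp
  have F2: "2 * Du' + 2 * hu' + Mu' + gm * Qd + gm * Hu' + Nu' \<le> 2 * Dy + 2 * hy + My + gm * Hu"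
    using F by simp
  have G2: "2 * b * ((Gu' - Du') - (Gu - Du)) - (b * gm - nu * b^2) * Qd \<le> 2 * R"
  proof -
    have "c * (2 * l * Dl) \<le> c * (Qd + l^2 * P)" using G cp by (intro mult_left_mono) auto
    moreover have "c * (2 * l * Dl) = 2 * b * Dl" using cp unfolding l c_def[symmetric] by simp
    moreover have "c * (Qd + l^2 * P) = c * Qd + 2 * R"
      unfolding R_def l c_def[symmetric] using cp
      by (simp add: power2_eq_square field_simps)
    ultimately show ?thesis unfolding eG c_def by simp
  qed
  have main: "2 * fp' + 2 * hp' + Mp' - 2 * fy - 2 * hy - My + Np'
     \<le> (1 - b) * (2 * fp + 2 * hp + Mp - 2 * fy - 2 * hy - My + Np)
        + 2 * b * ((Gu - Du) - (Gy - Dy)) + b * gm * (Hu - Hu') + 2 * R"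
    by (rule comb_arith[OF b01 A2 B2 C2 Dh DM E F2 G2])
  have "t * (t+1) * (fp' + (hp' + 1 / 2 * Mp') - fy - (hy + 1 / 2 * My) + 1 / 2 * Np')
     \<le> t * (t - 1) * (fp + (hp + 1 / 2 * Mp) - fy - (hy + 1 / 2 * My) + 1 / 2 * Np)
       + 2 * t * ((Gu - Du) - (Gy - Dy)) + (2 / eta) * (Hu - Hu') + eta * t^2 / (2 * (1 - eta * nu)) * P"
  proof (rule scale_step[OF t eta nu en P R_eq])
    show "2 * (fp' + (hp' + 1 / 2 * Mp') - fy - (hy + 1 / 2 * My) + 1 / 2 * Np')
      \<le> (1 - 2 / (t + 1)) * (2 * (fp + (hp + 1 / 2 * Mp) - fy - (hy + 1 / 2 * My) + 1 / 2 * Np)) +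
         2 * (2 / (t + 1)) * ((Gu - Du) - (Gy - Dy)) + 2 / (t + 1) * (2 / (t * eta)) * (Hu - Hu') + 2 * R"
      using main unfolding b[symmetric] gm[symmetric] by (simp add: algebra_simps)
  qed
  thus ?thesis by simp
qed

theorem lemma4p1:
  fixes X :: "(real^'n1) set" and A :: "real^'n1^'n" and b :: "real^'n"
    and N :: nat and fs :: "nat \<Rightarrow> real^'n1 \<Rightarrow> real" and gs :: "nat \<Rightarrow> real^'n1 \<Rightarrow> real^'n1"
    and U :: "(real^'n1) set" and H :: "real^'n1^'n1" and nu beta s :: real
    and x xb :: "nat \<Rightarrow> real^'n1" and lam :: "nat \<Rightarrow> real^'n"
    and m :: "nat \<Rightarrow> nat" and eta :: "nat \<Rightarrow> real" and M :: "nat \<Rightarrow> real^'n1^'n1"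
    and xi :: "nat \<Rightarrow> nat \<Rightarrow> nat" and e :: "nat \<Rightarrow> nat \<Rightarrow> real^'n1"
    and xin xbin :: "nat \<Rightarrow> nat \<Rightarrow> real^'n1" and k :: nat
  assumes X: "X \<noteq> {}" "closed X" "convex X"
    and N: "N \<ge> 1"
    and U: "open U" "X \<subseteq> U"
    and fconv: "\<forall>j\<in>{1..N}. convex_on U (fs j)"
    and fdiff: "\<forall>j\<in>{1..N}. \<forall>y\<in>U. (fs j has_derivative (\<lambda>h. gs j y \<bullet> h)) (at y)"
    and fcont: "\<forall>j\<in>{1..N}. continuous_on U (gs j)"
    and Hsym: "transpose H = H" and Hpd: "pos_def H"
    and nu: "nu > 0"
    and Lip: "\<forall>j\<in>{1..N}. \<forall>y1\<in>X. \<forall>y2\<in>X.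
                Gnorm (matrix_inv H) (gs j y1 - gs j y2) \<le> nu * Gnorm H (y1 - y2)"
    and beta: "beta > 0" and s: "0 < s" "s \<le> 2"
    and init: "x 0 \<in> X" "xb 0 = x 0"
    and mpos: "\<forall>k. m k \<ge> 1" and etapos: "\<forall>k. eta k > 0"
    and Msym: "\<forall>k. transpose (M k) = M k"
    and Dpsd: "\<forall>k. psd (M k - beta *\<^sub>R (transpose A ** A))"
    and xi: "\<forall>k t. 1 \<le> t \<and> t \<le> m k \<longrightarrow> xi k t \<in> {1..N}"
    and inner_init: "\<forall>k. xin k 1 = x k \<and> xbin k 1 = xb k"
    and inner_step: "\<forall>k t. 1 \<le> t \<and> t \<le> m k \<longrightarrow>
       (let bt = 2 / (real t + 1);
            gt = 2 / (real t * eta k);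
            xh = bt *\<^sub>R xbin k t + (1 - bt) *\<^sub>R xin k t;
            d = gs (xi k t) xh + e k t;
            h = - (transpose A *v (lam k - beta *\<^sub>R (A *v x k - b)));
            Phi = (\<lambda>z. (d + h) \<bullet> z + gt / 2 * qf H (z - xbin k t) + 1 / 2 * qf (M k) (z - x k))
        in xbin k (t + 1) \<in> X \<and> (\<forall>z\<in>X. Phi (xbin k (t + 1)) \<le> Phi z)
           \<and> xin k (t + 1) = bt *\<^sub>R xbin k (t + 1) + (1 - bt) *\<^sub>R xin k t)"
    and outer: "\<forall>k. x (k + 1) = xin k (m k + 1) \<and> xb (k + 1) = xbin k (m k + 1)
                  \<and> lam (k + 1) = lam k - (s * beta) *\<^sub>R (A *v x (k + 1) - b)"
    and eta_k: "eta k < 1 / nu"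
  shows "\<forall>y\<in>X.
    let fb = (\<lambda>z. (1 / real N) * (\<Sum>j=1..N. fs j z));
        gb = (\<lambda>z. (1 / real N) *\<^sub>R (\<Sum>j=1..N. gs j z));
        xh = (\<lambda>t. (2 / (real t + 1)) *\<^sub>R xbin k t + (1 - 2 / (real t + 1)) *\<^sub>R xin k t);
        delta = (\<lambda>t. gb (xh t) - (gs (xi k t) (xh t) + e k t));
        lt = lam k - beta *\<^sub>R (A *v x (k + 1) - b);
        D = M k - beta *\<^sub>R (transpose A ** A);
        mk = real (m k);
        zeta = 2 / (mk * (mk + 1)) *
          ((1 / eta k) * (qf H (y - xb (k + 1)) - qf H (y - xb k))
           - (\<Sum>t=1..m k. real t * (delta t \<bullet> (xbin k t - y)))
           - eta k / (4 * (1 - eta k * nu)) * (\<Sum>t=1..m k. (real t)^2 * qf (matrix_inv H) (delta t)))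
    in fb y - fb (x (k + 1)) + (y - x (k + 1)) \<bullet> (- (transpose A *v lt))
       \<ge> (x (k + 1) - y) \<bullet> (D *v (x (k + 1) - x k)) + zeta"
proof -
  have cX: "convex X" using X(3) .
  have Hps: "psd H" using pd_psd[OF Hpd] .
  have qfATA: "qf (transpose A ** A) v = (A *v v) \<bullet> (A *v v)" for v
  proof -
    have "qf (transpose A ** A) v = v \<bullet> (transpose A *v (A *v v))"
      unfolding qf_def by (simp only: matrix_vector_mul_assoc)
    also have "\<dots> = ((A *v v) v* A) \<bullet> v" by (simp add: inner_commute)
    also have "\<dots> = (A *v v) \<bullet> (A *v v)" by (simp add: dot_lmul_matrix)
    finally show ?thesis .
  qed
  have Mps: "psd (M k')" for k'
    unfolding psd_def
  proof
    fix v
    have "qf (M k') v = qf (M k' - beta *\<^sub>R (transpose A ** A)) v + beta * qf (transpose A ** A) v"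
      unfolding qf_def by (simp add: matrix_vector_mult_diff_rdistrib scaleR_matrix_vector_assoc[symmetric] inner_diff_right)
    moreover have "0 \<le> qf (M k' - beta *\<^sub>R (transpose A ** A)) v" using Dpsd unfolding psd_def by blast
    moreover have "0 \<le> beta * qf (transpose A ** A) v" using beta qfATA[of v] by simp
    ultimately show "0 \<le> qf (M k') v" by simp
  qed
  have memt: "\<And>k' t. x k' \<in> X \<Longrightarrow> xb k' \<in> X \<Longrightarrow> 1 \<le> t \<Longrightarrow> t \<le> m k' + 1 \<Longrightarrow> xin k' t \<in> X \<and> xbin k' t \<in> X"
  proof -
    fix k' t assume a: "x k' \<in> X" "xb k' \<in> X"
    show "1 \<le> t \<Longrightarrow> t \<le> m k' + 1 \<Longrightarrow> xin k' t \<in> X \<and> xbin k' t \<in> X"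
    proof (induction t)
      case 0 thus ?case by simp
    next
      case (Suc t)
      show ?case
      proof (cases "t = 0")
        case True thus ?thesis using inner_init a by simp
      next
        case False
        hence t: "1 \<le> t" "t \<le> m k'" using Suc.prems by auto
        have IH: "xin k' t \<in> X" using Suc.IH t by auto
        have st: "xbin k' (t + 1) \<in> X \<and> xin k' (t + 1) = (2 / (real t + 1)) *\<^sub>R xbin k' (t + 1) + (1 - 2 / (real t + 1)) *\<^sub>R xin k' t"
          using inner_step[THEN spec[where x=k'], THEN spec[where x=t]] t unfolding Let_def by blast
        have b: "0 \<le> 2 / (real t + 1)" "2 / (real t + 1) \<le> 1" using t by auto
        have "xin k' (t + 1) \<in> X" using st convexD[OF cX _ IH b(1), of "xbin k' (t + 1)"] b by simp
        thus ?thesis using st by simp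
      qed
    qed
  qed
  have memk: "x k' \<in> X \<and> xb k' \<in> X" for k'
  proof (induction k')
    case 0 thus ?case using init by simp
  next
    case (Suc k')
    have "xin k' (m k' + 1) \<in> X \<and> xbin k' (m k' + 1) \<in> X"
      using memt[of k' "m k' + 1"] Suc mpos by auto
    thus ?case using outer by simp
  qed
  define fb where "fb = (\<lambda>z. (1 / real N) * (\<Sum>j=1..N. fs j z))"
  define gb where "gb = (\<lambda>z. (1 / real N) *\<^sub>R (\<Sum>j=1..N. gs j z))"
  define xh where "xh = (\<lambda>t. (2 / (real t + 1)) *\<^sub>R xbin k t + (1 - 2 / (real t + 1)) *\<^sub>R xin k t)"
  define delta where "delta = (\<lambda>t. gb (xh t) - (gs (xi k t) (xh t) + e k t))"
  define lt where "lt = lam k - beta *\<^sub>R (A *v x (k + 1) - b)"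
  define D where "D = M k - beta *\<^sub>R (transpose A ** A)"
  define mk where "mk = real (m k)"
  define zeta where "zeta = (\<lambda>y. 2 / (mk * (mk + 1)) *
          ((1 / eta k) * (qf H (y - xb (k + 1)) - qf H (y - xb k))
           - (\<Sum>t=1..m k. real t * (delta t \<bullet> (xbin k t - y)))
           - eta k / (4 * (1 - eta k * nu)) * (\<Sum>t=1..m k. (real t)^2 * qf (matrix_inv H) (delta t))))"
  have main: "\<forall>y\<in>X. fb y - fb (x (k + 1)) + (y - x (k + 1)) \<bullet> (- (transpose A *v lt))
       \<ge> (x (k + 1) - y) \<bullet> (D *v (x (k + 1) - x k)) + zeta y"
  proof
    fix y assume yX: "y \<in> X"
    have xkX: "x k \<in> X" "xb k \<in> X" using memk by auto
    have mem: "\<And>t. 1 \<le> t \<Longrightarrow> t \<le> m k + 1 \<Longrightarrow> xin k t \<in> X \<and> xbin k t \<in> X"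
      using memt xkX by blast
    have etak: "eta k > 0" using etapos by blast
    have en: "eta k * nu < 1" using eta_k nu by (simp add: field_simps)
    define h where "h = - (transpose A *v (lam k - beta *\<^sub>R (A *v x k - b)))"
    define ell where "ell = (\<lambda>z. h \<bullet> z + 1 / 2 * qf (M k) (z - x k))"
    define E where "E = (\<lambda>t. fb (xin k t) + ell (xin k t) - fb y - ell y + 1 / 2 * qf (M k) (y - xin k t))"
    define Pt where "Pt = (\<lambda>t. qf (matrix_inv H) (delta t))"
    have step: "real t * (real t + 1) * E (t + 1) \<le> real t * (real t - 1) * E t
        + 2 * real t * (delta t \<bullet> (xbin k t - y))
        + (2 / eta k) * (qf H (y - xbin k t) - qf H (y - xbin k (t + 1)))
        + eta k * (real t)^2 / (2 * (1 - eta k * nu)) * Pt t"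
      if t: "1 \<le> t" "t \<le> m k" for t
    proof -
      define bb where "bb = 2 / (real t + 1)"
      define gm where "gm = 2 / (real t * eta k)"
      define u where "u = xbin k t"
      define u' where "u' = xbin k (t + 1)"
      define p where "p = xin k t"
      define p' where "p' = xin k (t + 1)"
      define q where "q = xh t"
      define d where "d = gs (xi k t) q + e k t"
      define g where "g = gb q"
      have st: "u' \<in> X \<and> (\<forall>z\<in>X. (d + h) \<bullet> u' + gm / 2 * qf H (u' - u) + 1 / 2 * qf (M k) (u' - x k)
                 \<le> (d + h) \<bullet> z + gm / 2 * qf H (z - u) + 1 / 2 * qf (M k) (z - x k))
               \<and> p' = bb *\<^sub>R u' + (1 - bb) *\<^sub>R p"
        using inner_step[THEN spec[where x=k], THEN spec[where x=t]] t
        unfolding Let_def bb_def gm_def u_def u'_def p_def p'_def d_def q_def xh_def h_def by blast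
      have u'X: "u' \<in> X" using st by blast
      have stmin: "\<forall>z\<in>X. (d + h) \<bullet> u' + gm / 2 * qf H (u' - u) + 1 / 2 * qf (M k) (u' - x k)
                 \<le> (d + h) \<bullet> z + gm / 2 * qf H (z - u) + 1 / 2 * qf (M k) (z - x k)" using st by blast
      have p'_eq: "p' = bb *\<^sub>R u' + (1 - bb) *\<^sub>R p" using st by blast
      have uX: "u \<in> X" and pX: "p \<in> X" using mem[of t] t unfolding u_def p_def by auto
      have p'X: "p' \<in> X" using mem[of "t + 1"] t unfolding p'_def by auto
      have bb01: "0 \<le> bb" "bb \<le> 1" using t by (auto simp: bb_def)
      have q_eq: "q = bb *\<^sub>R u + (1 - bb) *\<^sub>R p" unfolding q_def xh_def bb_def u_def p_def by simp
      have qX: "q \<in> X" unfolding q_eq using convexD[OF cX uX pX bb01(1)] bb01 by simp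
      have delta_eq: "delta t = g - d" unfolding delta_def g_def d_def q_def by simp
      have qU: "q \<in> U" "p \<in> U" "y \<in> U" using qX pX yX U(2) by auto
      have gm0: "0 \<le> gm" using etak by (simp add: gm_def)
      have A: "fb p' \<le> fb q + g \<bullet> (p' - q) + nu / 2 * qf H (p' - q)"
        unfolding fb_def g_def gb_def by (rule avg_desc[OF N Hsym Hpd nu U(2) cX fdiff Lip qX p'X])
      have dpq: "p' - q = bb *\<^sub>R (u' - u)" unfolding p'_eq q_eq by (simp add: algebra_simps)
      have eA1: "g \<bullet> (p' - q) = bb * (g \<bullet> u' - g \<bullet> u)" unfolding dpq by (simp add: inner_diff_right)
      have eA2: "qf H (p' - q) = bb^2 * qf H (u' - u)" unfolding dpq by (rule qf_scale)
      have B: "fb q + g \<bullet> (p - q) \<le> fb p"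
        unfolding fb_def g_def gb_def using avg_conv[OF N fconv fdiff qU(1) qU(2)] by simp
      have dpq2: "p - q = bb *\<^sub>R (p - u)" unfolding q_eq by (simp add: algebra_simps)
      have eB: "g \<bullet> (p - q) = bb * (g \<bullet> p - g \<bullet> u)" unfolding dpq2 by (simp add: inner_diff_right)
      have C: "fb q + g \<bullet> (y - q) \<le> fb y"
        unfolding fb_def g_def gb_def using avg_conv[OF N fconv fdiff qU(1) qU(3)] by simp
      have eC: "g \<bullet> (y - q) = g \<bullet> y - bb * (g \<bullet> u) - (1 - bb) * (g \<bullet> p)"
        unfolding q_eq by (simp add: inner_diff_right inner_add_right)
      have Dh: "h \<bullet> p' = bb * (h \<bullet> u') + (1 - bb) * (h \<bullet> p)"
        unfolding p'_eq by (simp add: inner_add_right)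
      have DM: "qf (M k) (p' - x k) \<le> bb * qf (M k) (u' - x k) + (1 - bb) * qf (M k) (p - x k)"
      proof -
        have "p' - x k = bb *\<^sub>R (u' - x k) + (1 - bb) *\<^sub>R (p - x k)" unfolding p'_eq by (simp add: algebra_simps)
        thus ?thesis using qf_comb_le[OF Msym[rule_format] Mps bb01] by simp
      qed
      have EE: "qf (M k) (y - p') \<le> bb * qf (M k) (y - u') + (1 - bb) * qf (M k) (y - p)"
      proof -
        have "y - p' = bb *\<^sub>R (y - u') + (1 - bb) *\<^sub>R (y - p)" unfolding p'_eq by (simp add: algebra_simps)
        thus ?thesis using qf_comb_le[OF Msym[rule_format] Mps bb01] by simp
      qed
      have F0: "(d + h) \<bullet> u' + gm / 2 * qf H (u' - u) + 1 / 2 * qf (M k) (u' - x k) + gm / 2 * qf H (y - u') + 1 / 2 * qf (M k) (y - u')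
          \<le> (d + h) \<bullet> y + gm / 2 * qf H (y - u) + 1 / 2 * qf (M k) (y - x k)"
        by (rule three_point[OF Hsym Msym[rule_format] Hps Mps gm0 cX u'X yX refl stmin])
      have F: "(d \<bullet> u' + h \<bullet> u') + gm / 2 * qf H (u' - u) + 1 / 2 * qf (M k) (u' - x k) + gm / 2 * qf H (y - u') + 1 / 2 * qf (M k) (y - u')
          \<le> (d \<bullet> y + h \<bullet> y) + gm / 2 * qf H (y - u) + 1 / 2 * qf (M k) (y - x k)"
        using F0 unfolding inner_add_left .
      define l where "l = bb / (bb * gm - nu * bb^2)"
      have G: "2 * l * (delta t \<bullet> (u' - u)) \<le> qf H (u' - u) + l^2 * qf (matrix_inv H) (delta t)"
        by (rule quad_key[OF Hsym Hpd])
      have eG: "delta t \<bullet> (u' - u) = (g \<bullet> u' - d \<bullet> u') - (g \<bullet> u - d \<bullet> u)"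
        unfolding delta_eq by (simp add: inner_diff_left inner_diff_right)
      have P0: "0 \<le> qf (matrix_inv H) (delta t)" by (rule qfinv_nonneg[OF Hpd])
      have tr: "real t \<ge> 1" using t by simp
      have R: "real t * (real t + 1) * (fb p' + (h \<bullet> p' + 1 / 2 * qf (M k) (p' - x k)) - fb y - (h \<bullet> y + 1 / 2 * qf (M k) (y - x k)) + 1 / 2 * qf (M k) (y - p'))
     \<le> real t * (real t - 1) * (fb p + (h \<bullet> p + 1 / 2 * qf (M k) (p - x k)) - fb y - (h \<bullet> y + 1 / 2 * qf (M k) (y - x k)) + 1 / 2 * qf (M k) (y - p))
        + 2 * real t * ((g \<bullet> u - d \<bullet> u) - (g \<bullet> y - d \<bullet> y)) + (2 / eta k) * (qf H (y - u) - qf H (y - u'))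
        + eta k * (real t)^2 / (2 * (1 - eta k * nu)) * qf (matrix_inv H) (delta t)"
        by (rule step_arith[OF tr etak nu en P0 bb_def[unfolded of_nat_1] gm_def l_def A eA1 eA2 B eB C eC Dh DM EE F G eG])
      have eX: "delta t \<bullet> (xbin k t - y) = (g \<bullet> u - d \<bullet> u) - (g \<bullet> y - d \<bullet> y)"
        unfolding delta_eq u_def by (simp add: inner_diff_left inner_diff_right)
      show ?thesis using R unfolding E_def ell_def Pt_def eX p_def p'_def u_def u'_def by simp
    qed
    have tele: "real T * (real T + 1) * E (T + 1) \<le> (\<Sum>t=1..T. 2 * real t * (delta t \<bullet> (xbin k t - y)) + eta k * (real t)^2 / (2 * (1 - eta k * nu)) * Pt t)
        + (2 / eta k) * (qf H (y - xbin k 1) - qf H (y - xbin k (T + 1)))" if "T \<le> m k" for T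
      using that
    proof (induction T)
      case 0 thus ?case by simp
    next
      case (Suc T)
      have IH: "real T * (real T + 1) * E (T + 1) \<le> (\<Sum>t=1..T. 2 * real t * (delta t \<bullet> (xbin k t - y)) + eta k * (real t)^2 / (2 * (1 - eta k * nu)) * Pt t)
        + (2 / eta k) * (qf H (y - xbin k 1) - qf H (y - xbin k (T + 1)))" using Suc by simp
      have S: "real (Suc T) * (real (Suc T) + 1) * E (Suc T + 1) \<le> real (Suc T) * (real (Suc T) - 1) * E (Suc T)
        + 2 * real (Suc T) * (delta (Suc T) \<bullet> (xbin k (Suc T) - y))
        + (2 / eta k) * (qf H (y - xbin k (Suc T)) - qf H (y - xbin k (Suc T + 1)))
        + eta k * (real (Suc T))^2 / (2 * (1 - eta k * nu)) * Pt (Suc T)"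
        by (rule step) (use Suc.prems in auto)
      have e1: "real (Suc T) * (real (Suc T) - 1) * E (Suc T) = real T * (real T + 1) * E (T + 1)"
        by (simp add: algebra_simps)
      have e2: "(\<Sum>t=1..Suc T. 2 * real t * (delta t \<bullet> (xbin k t - y)) + eta k * (real t)^2 / (2 * (1 - eta k * nu)) * Pt t)
        = (\<Sum>t=1..T. 2 * real t * (delta t \<bullet> (xbin k t - y)) + eta k * (real t)^2 / (2 * (1 - eta k * nu)) * Pt t)
          + (2 * real (Suc T) * (delta (Suc T) \<bullet> (xbin k (Suc T) - y)) + eta k * (real (Suc T))^2 / (2 * (1 - eta k * nu)) * Pt (Suc T))"
        by simp
      show ?case using IH S e1 e2 unfolding Suc_eq_plus1[symmetric] right_diff_distrib by linarith
    qed
    have mk1: "mk \<ge> 1" using mpos by (simp add: mk_def)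
    have TT: "mk * (mk + 1) * E (m k + 1) \<le> (\<Sum>t=1..m k. 2 * real t * (delta t \<bullet> (xbin k t - y)) + eta k * (real t)^2 / (2 * (1 - eta k * nu)) * Pt t)
        + (2 / eta k) * (qf H (y - xb k) - qf H (y - xb (k + 1)))"
      using tele[of "m k"] inner_init outer unfolding mk_def by simp
    define Z where "Z = (1 / eta k) * (qf H (y - xb (k + 1)) - qf H (y - xb k))
           - (\<Sum>t=1..m k. real t * (delta t \<bullet> (xbin k t - y)))
           - eta k / (4 * (1 - eta k * nu)) * (\<Sum>t=1..m k. (real t)^2 * qf (matrix_inv H) (delta t))"
    have zZ: "zeta y = 2 / (mk * (mk + 1)) * Z" unfolding zeta_def Z_def by simp
    have en1: "1 - eta k * nu \<noteq> 0" using en by simp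
    have SZ: "(\<Sum>t=1..m k. 2 * real t * (delta t \<bullet> (xbin k t - y)) + eta k * (real t)^2 / (2 * (1 - eta k * nu)) * Pt t)
        + (2 / eta k) * (qf H (y - xb k) - qf H (y - xb (k + 1))) = - 2 * Z"
    proof -
      have a: "\<And>t. eta k * (real t)^2 / (2 * (1 - eta k * nu)) * Pt t = 2 * (eta k / (4 * (1 - eta k * nu))) * ((real t)^2 * qf (matrix_inv H) (delta t))"
        unfolding Pt_def using en1 by (simp add: field_simps)
      have b: "\<And>t. 2 * real t * (delta t \<bullet> (xbin k t - y)) = 2 * (real t * (delta t \<bullet> (xbin k t - y)))" by simp
      show ?thesis unfolding a b sum.distrib sum_distrib_left[symmetric] Z_def using etak
        by (simp add: algebra_simps)
    qed
    have EZ: "E (m k + 1) \<le> - zeta y"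
    proof -
      have pos: "mk * (mk + 1) > 0" using mk1 by simp
      have "mk * (mk + 1) * E (m k + 1) \<le> - 2 * Z" using TT SZ by simp
      hence "E (m k + 1) \<le> - 2 * Z / (mk * (mk + 1))" using pos by (simp add: field_simps)
      thus ?thesis unfolding zZ by simp
    qed
    define x' where "x' = x (k + 1)"
    define w where "w = x' - x k"
    define Wv where "Wv = transpose A *v (A *v w)"
    have xo: "xin k (m k + 1) = x'" using outer unfolding x'_def by simp
    have v1: "- (transpose A *v lt) = h + beta *\<^sub>R Wv"
      unfolding lt_def h_def Wv_def w_def x'_def
      by (simp del: transpose_matrix_vector add: matrix_vector_right_distrib matrix_vector_mult_diff_distrib matrix_vector_mult_scaleR algebra_simps)
    have v2: "D *v w = M k *v w - beta *\<^sub>R Wv"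
      unfolding D_def Wv_def
      by (simp del: transpose_matrix_vector add: matrix_vector_mult_diff_rdistrib scaleR_matrix_vector_assoc[symmetric] matrix_vector_mul_assoc)
    have i1: "(y - x') \<bullet> (- (transpose A *v lt)) = h \<bullet> y - h \<bullet> x' + beta * ((y - x') \<bullet> Wv)"
      unfolding v1 by (simp add: inner_add_right inner_diff_right inner_commute)
    have i2: "(x' - y) \<bullet> (D *v w) = - ((y - x') \<bullet> (M k *v w)) + beta * ((y - x') \<bullet> Wv)"
    proof -
      have "x' - y = - (y - x')" by simp
      thus ?thesis unfolding v2 by (simp only: inner_minus_left inner_diff_right inner_scaleR_right)
    qed
    have i4: "qf (M k) (y - x k) = qf (M k) (y - x') + 2 * ((y - x') \<bullet> (M k *v w)) + qf (M k) w"
    proof -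
      have "y - x k = (y - x') + w" unfolding w_def by simp
      hence "qf (M k) (y - x k) = qf (M k) ((y - x') + w)" by (simp only:)
      thus ?thesis using qf_add[OF Msym[rule_format, of k], of "y - x'" w] by (simp only:)
    qed
    have EE: "fb x' + (h \<bullet> x' + 1 / 2 * qf (M k) w) - fb y - (h \<bullet> y + 1 / 2 * qf (M k) (y - x k)) + 1 / 2 * qf (M k) (y - x') \<le> - zeta y"
      using EZ unfolding E_def ell_def xo w_def by simp
    show "fb y - fb (x (k + 1)) + (y - x (k + 1)) \<bullet> (- (transpose A *v lt))
       \<ge> (x (k + 1) - y) \<bullet> (D *v (x (k + 1) - x k)) + zeta y"
      unfolding x'_def[symmetric] w_def[symmetric] i1 i2 using EE i4 by linarith
  qed
  show ?thesis using main unfolding Let_def fb_def gb_def xh_def delta_def lt_def D_def mk_def zeta_def by simp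
qed

end
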